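(* For every $n\ge1$, $\eta_{0,1,1}(N_{n,n})=1$. For $n\ge2$, \[ \eta_{0,1,1}(N_{n,k})=\begin{cases}\zeta(n)-\eta_{0,1,1}(N_{n-1,1}), & k=1,\\ \zeta(n)+\eta_{0,1,1}(N_{n-1,k-1})-\eta_{0,1,1}(N_{n-1,k}), & 1<k<n.\end{cases} \]
   Context: For a composition $I=(i_1,\dots,i_j)$ and $n\ge1$, $M_I(n)=\sum_{1\le n_1<\cdots<n_j\le n}n_1^{-i_1}\cdots n_j^{-i_j}$. Define $\eta_{0,1,1}(M_I)=\sum_{n=1}^\infty\frac{M_I(n)}{(n+1)(n+2)}$, extended linearly. For $n\ge m\ge1$, $N_{n,m}=\sum_I M_I$, the sum over all compositions $I$ of $n$ with exactly $m$ parts (the sum of monomial symmetric functions over partitions of $n$ with $m$ parts). $\zeta$ is the Riemann zeta function. *)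

theory Defs
  imports "HOL-Analysis.Analysis"
begin

definition compositions :: "nat \<Rightarrow> nat \<Rightarrow> nat list set" where
  "compositions n m = {I. sum_list I = n \<and> length I = m \<and> (\<forall>x\<in>set I. 0 < x)}"

text \<open>Multiple harmonic sum M_I(N): sum over 1 \<le> n_1 < ... < n_j \<le> N of
  prod n_k^(-i_k). Strictly increasing tuples are identified with subsets
  of {1..N} of cardinality j, listed in increasing order.\<close>
definition MHS :: "nat list \<Rightarrow> nat \<Rightarrow> real" where
  "MHS I N = (\<Sum>S\<in>{S. S \<subseteq> {1..N} \<and> card S = length I}.
      \<Prod>k<length I. 1 / real (sorted_list_of_set S ! k) ^ (I ! k))"

definition Nsym :: "nat \<Rightarrow> nat \<Rightarrow> nat \<Rightarrow> real" where
  "Nsym n m N = (\<Sum>I\<in>compositions n m. MHS I N)"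

text \<open>eta_{0,1,1}(f) = sum_{N\<ge>1} f(N) / ((N+1)(N+2)).\<close>
definition eta011 :: "(nat \<Rightarrow> real) \<Rightarrow> real" where
  "eta011 f = (\<Sum>k. f (k + 1) / (real (k + 2) * real (k + 3)))"

definition zeta_nat :: "nat \<Rightarrow> real" where
  "zeta_nat s = (\<Sum>k. 1 / real (k + 1) ^ s)"

end

theory Submission
  imports Defs "HOL-Real_Asymp.Real_Asymp"
begin


lemma comp_len: "\<forall>x\<in>set I. 0 < (x::nat) \<Longrightarrow> length I \<le> sum_list I"
  by (induction I) auto

lemma finite_compositions: "finite (compositions n m)"
proof -
  have "compositions n m \<subseteq> {xs. set xs \<subseteq> {0..n} \<and> length xs = m}"
    unfolding compositions_def using member_le_sum_list by fastforce
  thus ?thesis by (rule finite_subset) (simp add: finite_lists_length_eq)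
qed

lemma compositions_empty: "n < m \<Longrightarrow> compositions n m = {}"
  unfolding compositions_def using comp_len by fastforce

lemma Nsym_small: "n < m \<Longrightarrow> Nsym n m N = 0"
  unfolding Nsym_def by (simp add: compositions_empty)

lemma compositions_0: "compositions n 0 = (if n = 0 then {[]} else {})"
  unfolding compositions_def by auto

lemma MHS_nil: "MHS [] N = 1"
proof -
  have "{S. S \<subseteq> {1..N} \<and> card S = 0} = {{}}"
  proof (intro equalityI subsetI)
    fix S assume S: "S \<in> {S. S \<subseteq> {1..N} \<and> card S = 0}"
    hence "finite S" using finite_subset by blast
    thus "S \<in> {{}}" using S by auto
  qed auto
  thus ?thesis unfolding MHS_def by simp
qed

lemma Nsym_0: "Nsym n 0 N = (if n = 0 then 1 else 0)"
  unfolding Nsym_def compositions_0 by (simp add: MHS_nil)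

lemma MHS_nonneg: "MHS I N \<ge> 0"
  unfolding MHS_def by (intro sum_nonneg prod_nonneg) auto

lemma Nsym_nonneg: "Nsym n m N \<ge> 0"
  unfolding Nsym_def by (intro sum_nonneg MHS_nonneg)

lemma compositions_Suc:
  "compositions n (Suc k) = (\<lambda>(i,I). I @ [i]) ` (SIGMA i:{1..n}. compositions (n-i) k)"
proof (intro equalityI subsetI)
  fix J assume J: "J \<in> compositions n (Suc k)"
  hence ne: "J \<noteq> []" unfolding compositions_def by auto
  have J': "J = butlast J @ [last J]" using ne by simp
  have sl: "sum_list J = sum_list (butlast J) + last J"
    by (subst J') simp
  have lJ: "last J \<in> set J" using ne by simp
  have pos: "last J \<ge> 1" using J lJ unfolding compositions_def by (auto simp: Suc_le_eq)
  have len: "length (butlast J) = k" using J unfolding compositions_def by auto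
  have sn: "sum_list J = n" using J unfolding compositions_def by auto
  have allp: "\<forall>x\<in>set (butlast J). 0 < x" using J unfolding compositions_def
    by (auto dest: in_set_butlastD)
  have mem: "(last J, butlast J) \<in> (SIGMA i:{1..n}. compositions (n-i) k)"
    using sl pos len sn allp unfolding compositions_def by auto
  show "J \<in> (\<lambda>(i,I). I @ [i]) ` (SIGMA i:{1..n}. compositions (n-i) k)"
    by (rule image_eqI[OF _ mem]) (simp add: J'[symmetric])
next
  fix J assume "J \<in> (\<lambda>(i,I). I @ [i]) ` (SIGMA i:{1..n}. compositions (n-i) k)"
  then obtain i I where "J = I @ [i]" "i \<in> {1..n}" "I \<in> compositions (n-i) k" by auto
  thus "J \<in> compositions n (Suc k)" unfolding compositions_def by auto
qed

lemma sl_insert_max: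
  assumes "finite T" "\<forall>t\<in>T. t < (m::nat)"
  shows "sorted_list_of_set (insert m T) = sorted_list_of_set T @ [m]"
proof -
  have "m \<notin> T" using assms by auto
  hence "sorted_list_of_set (insert m T) = insort m (sorted_list_of_set T)"
    using assms by (simp add: sorted_list_of_set_insert)
  also have "\<dots> = sorted_list_of_set T @ [m]"
    using assms by (intro sorted_insort_is_snoc) (auto simp: less_imp_le)
  finally show ?thesis .
qed

lemma subsets_Suc:
  fixes N l :: nat
  shows "{S. S \<subseteq> {1..N} \<and> card S = Suc l} =
     (\<lambda>(m,T). insert m T) ` (SIGMA m:{1..N}. {T. T \<subseteq> {1..m-1} \<and> card T = l})"
proof (intro equalityI subsetI)
  fix S assume S: "S \<in> {S. S \<subseteq> {1..N} \<and> card S = Suc l}"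
  hence fin: "finite S" using finite_subset[OF _ finite_atLeastAtMost] by blast
  hence ne: "S \<noteq> {}" using S by auto
  define m where "m = Max S"
  have mS: "m \<in> S" using fin ne by (simp add: m_def)
  have le: "\<forall>t\<in>S. t \<le> m" using fin by (simp add: m_def)
  have "S - {m} \<subseteq> {1..m-1}" using S le mS by fastforce
  moreover have "card (S - {m}) = l" using S mS fin by simp
  moreover have "S = insert m (S - {m})" using mS by auto
  ultimately show "S \<in> (\<lambda>(m,T). insert m T) ` (SIGMA m:{1..N}. {T. T \<subseteq> {1..m-1} \<and> card T = l})"
    using S mS by (intro image_eqI[of _ _ "(m, S - {m})"]) auto
next
  fix S assume "S \<in> (\<lambda>(m,T). insert m T) ` (SIGMA m:{1..N}. {T. T \<subseteq> {1..m-1} \<and> card T = l})"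
  then obtain m T where S: "S = insert m T" "m \<in> {1..N}" "T \<subseteq> {1..m-1}" "card T = l" by auto
  have "m \<notin> T" using S by auto
  moreover have "finite T" using S finite_subset by blast
  moreover have "\<forall>t\<in>T. 1 \<le> t \<and> t \<le> m - 1" using S(3) by auto
  ultimately show "S \<in> {S. S \<subseteq> {1..N} \<and> card S = Suc l}" using S by auto
qed

lemma inj_insert_max:
  fixes N l :: nat
  shows "inj_on (\<lambda>(m,T). insert m T) (SIGMA m:{1..N}. {T. T \<subseteq> {1..m-1} \<and> (card T::nat) = l})"
proof (rule inj_onI, clarify)
  fix m m' :: nat and T T' :: "nat set"
  assume a: "m \<in> {1..N}" "T \<subseteq> {1..m-1}" "m' \<in> {1..N}" "T' \<subseteq> {1..m'-1}" "insert m T = insert m' T'"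
  have "m \<in> insert m' T'" using a(5) by auto
  hence "m = m' \<or> m \<in> {1..m'-1}" using a(4) by blast
  hence "m \<le> m'" by auto
  moreover have "m' \<in> insert m T" using a(5) by auto
  hence "m' = m \<or> m' \<in> {1..m-1}" using a(2) by blast
  hence "m' \<le> m" by auto
  ultimately have "m = m'" by simp
  moreover have "m \<notin> T" "m' \<notin> T'" using a by auto
  ultimately show "m = m' \<and> T = T'" using a(5) by (metis Diff_insert_absorb)
qed

lemma MHS_snoc:
  "MHS (I @ [i]) N = (\<Sum>m=1..N. MHS I (m-1) / real m ^ i)"
proof -
  define l where "l = length I"
  define F where "F S = (\<Prod>k<Suc l. 1 / real (sorted_list_of_set S ! k) ^ ((I @ [i]) ! k))" for S
  have "MHS (I @ [i]) N = (\<Sum>S\<in>{S. S \<subseteq> {1..N} \<and> card S = Suc l}. F S)"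
    unfolding MHS_def F_def l_def by simp
  also have "\<dots> = (\<Sum>p\<in>(SIGMA m:{1..N}. {T. T \<subseteq> {1..m-1} \<and> card T = l}). F (case p of (m,T) \<Rightarrow> insert m T))"
    unfolding subsets_Suc by (subst sum.reindex[OF inj_insert_max]) (simp add: o_def split_def)
  also have "\<dots> = (\<Sum>m=1..N. \<Sum>T\<in>{T. T \<subseteq> {1..m-1} \<and> card T = l}. F (insert m T))"
    by (subst sum.Sigma) (auto simp: split_def)
  also have "\<dots> = (\<Sum>m=1..N. MHS I (m-1) / real m ^ i)"
  proof (intro sum.cong refl)
    fix m assume m: "m \<in> {1..N}"
    have "(\<Sum>T\<in>{T. T \<subseteq> {1..m-1} \<and> card T = l}. F (insert m T)) =
          (\<Sum>T\<in>{T. T \<subseteq> {1..m-1} \<and> card T = l}.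
             (\<Prod>k<l. 1 / real (sorted_list_of_set T ! k) ^ (I ! k)) / real m ^ i)"
    proof (intro sum.cong refl)
      fix T assume T: "T \<in> {T. T \<subseteq> {1..m-1} \<and> card T = l}"
      have fin: "finite T" using T finite_subset by blast
      have lt: "\<forall>t\<in>T. t < m"
      proof
        fix t assume "t \<in> T"
        hence "t \<in> {1..m-1}" using T by blast
        thus "t < m" using m by auto
      qed
      have len: "length (sorted_list_of_set T) = l" using T by simp
      have "F (insert m T) = (\<Prod>k<Suc l. 1 / real ((sorted_list_of_set T @ [m]) ! k) ^ ((I @ [i]) ! k))"
        unfolding F_def using sl_insert_max[OF fin lt] by simp
      also have "\<dots> = (\<Prod>k<l. 1 / real (sorted_list_of_set T ! k) ^ (I ! k)) * (1 / real m ^ i)"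
        using len by (simp add: prod.lessThan_Suc nth_append l_def)
      finally show "F (insert m T) = (\<Prod>k<l. 1 / real (sorted_list_of_set T ! k) ^ (I ! k)) / real m ^ i"
        by simp
    qed
    also have "\<dots> = MHS I (m-1) / real m ^ i"
      unfolding MHS_def l_def by (simp add: sum_divide_distrib)
    finally show "(\<Sum>T\<in>{T. T \<subseteq> {1..m-1} \<and> card T = l}. F (insert m T)) = MHS I (m-1) / real m ^ i" .
  qed
  finally show ?thesis .
qed

lemma Nsym_Suc:
  "Nsym n (Suc k) N = (\<Sum>m=1..N. \<Sum>i=1..n. Nsym (n-i) k (m-1) / real m ^ i)"
proof -
  have inj: "inj_on (\<lambda>(i,I). I @ [i]) (SIGMA i:{1..n}. compositions (n-i) k)"
    by (rule inj_onI) auto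
  have "Nsym n (Suc k) N = (\<Sum>i=1..n. \<Sum>I\<in>compositions (n-i) k. MHS (I @ [i]) N)"
    unfolding Nsym_def compositions_Suc
    by (subst sum.reindex[OF inj]) (simp add: sum.Sigma finite_compositions split_def)
  also have "\<dots> = (\<Sum>i=1..n. \<Sum>I\<in>compositions (n-i) k. \<Sum>m=1..N. MHS I (m-1) / real m ^ i)"
    by (simp add: MHS_snoc)
  also have "\<dots> = (\<Sum>i=1..n. \<Sum>m=1..N. \<Sum>I\<in>compositions (n-i) k. MHS I (m-1) / real m ^ i)"
    by (rule sum.cong[OF refl], rule sum.swap)
  also have "\<dots> = (\<Sum>m=1..N. \<Sum>i=1..n. \<Sum>I\<in>compositions (n-i) k. MHS I (m-1) / real m ^ i)"
    by (rule sum.swap)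
  also have "\<dots> = (\<Sum>m=1..N. \<Sum>i=1..n. Nsym (n-i) k (m-1) / real m ^ i)"
    unfolding Nsym_def by (simp add: sum_divide_distrib)
  finally show ?thesis .
qed




lemma hs_shift: "((\<lambda>i. f (i + (a::nat))) has_sum S) UNIV \<longleftrightarrow> (f has_sum S) {a..}"
proof -
  have "bij_betw (\<lambda>i::nat. i + a) UNIV {a..}"
    by (rule bij_betwI[of _ _ _ "\<lambda>j. j - a"]) auto
  from has_sum_reindex_bij_betw[OF this, of f S] show ?thesis .
qed

lemma swap_nonneg_ex:
  fixes f :: "nat \<Rightarrow> nat \<Rightarrow> real"
  assumes nn: "\<And>a b. a \<in> A \<Longrightarrow> b \<in> B a \<Longrightarrow> 0 \<le> f a b"
    and rows: "\<And>a. a \<in> A \<Longrightarrow> ((\<lambda>b. f a b) has_sum g a) (B a)"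
    and tot: "(g has_sum S) A"
    and eqset: "\<And>a b. (a \<in> A \<and> b \<in> B a) \<longleftrightarrow> (b \<in> C \<and> a \<in> D b)"
  shows "\<forall>b\<in>C. (\<lambda>a. f a b) summable_on D b"
    and "((\<lambda>b. infsum (\<lambda>a. f a b) (D b)) has_sum S) C"
proof -
  define F where "F = (\<lambda>(a,b). f a b)"
  have rows': "\<And>a. a \<in> A \<Longrightarrow> ((\<lambda>b. F (a, b)) has_sum g a) (B a)"
    using rows by (simp add: F_def)
  have sm: "F summable_on Sigma A B"
    by (rule summable_on_SigmaI[where g=g, OF rows']) (use tot nn in \<open>auto simp: F_def summable_on_def\<close>)
  have hs: "(F has_sum S) (Sigma A B)"
    by (rule has_sum_SigmaI[where g=g, OF rows' tot sm])
  have bij: "bij_betw (\<lambda>(b,a). (a,b)) (Sigma C D) (Sigma A B)"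
    by (rule bij_betwI[of _ _ _ "\<lambda>(a,b). (b,a)"]) (use eqset in auto)
  have hs2: "((\<lambda>(b,a). f a b) has_sum S) (Sigma C D)"
    using has_sum_reindex_bij_betw[OF bij, of F S] hs by (simp add: F_def split_def)
  have sm2: "(\<lambda>(b,a). (\<lambda>b a. f a b) b a) summable_on Sigma C D"
    using hs2 by (auto simp: summable_on_def)
  show cols: "\<forall>b\<in>C. (\<lambda>a. f a b) summable_on D b"
    using summable_on_SigmaD1[OF sm2] by auto
  show "((\<lambda>b. infsum (\<lambda>a. f a b) (D b)) has_sum S) C"
    by (rule has_sum_SigmaD[OF hs2]) (use cols in auto)
qed

lemma swap_nonneg:
  fixes f :: "nat \<Rightarrow> nat \<Rightarrow> real"
  assumes nn: "\<And>a b. a \<in> A \<Longrightarrow> b \<in> B a \<Longrightarrow> 0 \<le> f a b"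
    and rows: "\<And>a. a \<in> A \<Longrightarrow> ((\<lambda>b. f a b) has_sum g a) (B a)"
    and tot: "(g has_sum S) A"
    and eqset: "\<And>a b. (a \<in> A \<and> b \<in> B a) \<longleftrightarrow> (b \<in> C \<and> a \<in> D b)"
    and cols: "\<And>b. b \<in> C \<Longrightarrow> ((\<lambda>a. f a b) has_sum h b) (D b)"
  shows "(h has_sum S) C"
proof -
  have "((\<lambda>b. infsum (\<lambda>a. f a b) (D b)) has_sum S) C"
    by (rule swap_nonneg_ex(2)[OF nn rows tot eqset])
  moreover have "\<And>b. b \<in> C \<Longrightarrow> infsum (\<lambda>a. f a b) (D b) = h b"
    using cols by (simp add: infsumI)
  ultimately show ?thesis using has_sum_cong[of C "\<lambda>b. infsum (\<lambda>a. f a b) (D b)" h S] by simp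
qed

definition u :: "real \<Rightarrow> nat \<Rightarrow> real" where "u x m = 1 / (real m - x)"

fun el :: "nat \<Rightarrow> real \<Rightarrow> nat \<Rightarrow> real" where
  "el 0 x N = 1"
| "el (Suc k) x N = (\<Sum>m=1..N. el k x (m-1) * u x m)"

definition E :: "real \<Rightarrow> nat \<Rightarrow> nat \<Rightarrow> real" where
  "E x n p = (\<Prod>j=1..p. (real j - x) / (real (n + j) - x))"

context
  fixes x :: real
  assumes x0: "0 \<le> x" and x1: "x \<le> 1/2"
begin

lemma u_pos: "m \<ge> 1 \<Longrightarrow> u x m > 0"
  using x1 unfolding u_def by auto

lemma u_nonneg: "m \<ge> 1 \<Longrightarrow> u x m \<ge> 0"
  using u_pos[of m] by simp

lemma u_le: "m \<ge> 1 \<Longrightarrow> u x m \<le> 2 / real m"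
  using x1 unfolding u_def by (auto simp: field_simps)

lemma el_nonneg: "el k x N \<ge> 0"
proof (induction k arbitrary: N)
  case (Suc k) thus ?case by (auto intro!: sum_nonneg mult_nonneg_nonneg u_nonneg)
qed simp

lemma el_0: "k \<ge> 1 \<Longrightarrow> el k x 0 = 0"
  by (cases k) auto

lemma E_n0: "E x n 0 = 1" unfolding E_def by simp

lemma E_0p: "E x 0 p = 1"
  unfolding E_def using x1 by (intro prod.neutral) auto

lemma E_Suc: "E x n (Suc p) = E x n p * ((real (Suc p) - x) / (real (n + Suc p) - x))"
  unfolding E_def by (simp add: prod.nat_ivl_Suc')

lemma E_nonneg: "E x n p \<ge> 0"
  unfolding E_def using x1 by (intro prod_nonneg) auto

lemma E_le1: "E x n p \<le> 1"
proof (induction p)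
  case (Suc p)
  have "(real (Suc p) - x) / (real (n + Suc p) - x) \<le> 1" using x1 by auto
  moreover have "(real (Suc p) - x) / (real (n + Suc p) - x) \<ge> 0" using x1 by auto
  ultimately have "E x n p * ((real (Suc p) - x) / (real (n + Suc p) - x)) \<le> 1"
    using Suc E_nonneg[of n p] by (intro mult_le_one) auto
  thus ?case by (simp only: E_Suc)
qed (simp add: E_n0)

lemma E_rec_n: "E x n p * (real n + 1 - x) = E x (Suc n) p * (real n + real p + 1 - x)"
proof (induction p)
  case 0 thus ?case by (simp add: E_n0)
next
  case (Suc p)
  have d1: "real (n + Suc p) - x > 0" "real (Suc n + Suc p) - x > 0" using x1 by auto
  have "E x n (Suc p) * (real n + 1 - x) = E x n p * (real n + 1 - x) * ((real (Suc p) - x) / (real (n + Suc p) - x))"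
    by (simp add: E_Suc)
  also have "\<dots> = E x (Suc n) p * (real n + real p + 1 - x) * ((real (Suc p) - x) / (real (n + Suc p) - x))"
    by (simp add: Suc)
  also have "\<dots> = E x (Suc n) p * (real (Suc p) - x)"
    using d1 by (simp add: field_simps)
  also have "\<dots> = E x (Suc n) (Suc p) * (real n + real (Suc p) + 1 - x)"
    using d1 by (simp add: E_Suc field_simps)
  finally show ?case .
qed

lemma E_diff_n: "E x n p - E x (Suc n) p = real p * u x (Suc n) * E x (Suc n) p"
proof -
  have d: "real n + 1 - x > 0" using x1 by auto
  have "E x n p = E x (Suc n) p * (real n + real p + 1 - x) / (real n + 1 - x)"
    using E_rec_n[of n p] d by (simp add: field_simps)
  thus ?thesis using d unfolding u_def by (simp add: field_simps)
qed

lemma E_diff_p: "E x n p - E x n (Suc p) = real n * u x (Suc p) * E x n (Suc p)"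
proof -
  have d: "real (Suc p) - x > 0" "real (n + Suc p) - x > 0" using x1 by auto
  have "E x n (Suc p) * (real (n + Suc p) - x) = E x n p * (real (Suc p) - x)"
    using d by (simp add: E_Suc field_simps)
  hence "E x n p = E x n (Suc p) * (real (n + Suc p) - x) / (real (Suc p) - x)"
    using d by (simp add: field_simps)
  thus ?thesis using d unfolding u_def by (simp add: field_simps)
qed

lemma E_bound_n: "p \<ge> 1 \<Longrightarrow> E x n p \<le> real p / (real n + 1/2)"
proof -
  assume p: "p \<ge> 1"
  then obtain q where q: "p = Suc q" by (cases p) auto
  have "E x n p = E x n q * ((real (Suc q) - x) / (real (n + Suc q) - x))"
    by (simp add: q E_Suc)
  also have "\<dots> \<le> 1 * ((real (Suc q) - x) / (real (n + Suc q) - x))"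
    using x1 by (intro mult_right_mono E_le1) auto
  also have "\<dots> \<le> real p / (real n + 1/2)"
  proof -
    have "(real (Suc q) - x) / (real (n + Suc q) - x) \<le> real p / (real n + 1/2)"
      by (rule frac_le) (use x0 x1 q in auto)
    thus ?thesis by simp
  qed
  finally show ?thesis .
qed

lemma E_bound_p: "n \<ge> 1 \<Longrightarrow> E x n p * (real p + 1 - x) \<le> 1 - x"
proof (induction p)
  case 0 thus ?case by (simp add: E_n0)
next
  case (Suc p)
  have d: "real (n + Suc p) - x > 0" using x1 by auto
  have "E x n (Suc p) * (real (Suc p) + 1 - x) =
        E x n p * (real p + 1 - x) * ((real p + 2 - x) / (real (n + Suc p) - x))"
    using d by (simp add: E_Suc field_simps)
  also have "\<dots> \<le> E x n p * (real p + 1 - x) * 1"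
    using Suc.prems d E_nonneg[of n p] x1
    by (intro mult_left_mono) (auto intro!: mult_nonneg_nonneg)
  also have "\<dots> \<le> 1 - x" using Suc by simp
  finally show ?case .
qed

lemma E_lim_n: "p \<ge> 1 \<Longrightarrow> (\<lambda>i. E x (N + i) p) \<longlonglongrightarrow> 0"
proof -
  assume p: "p \<ge> 1"
  have lim: "(\<lambda>i. real p / (real (N + i) + 1/2)) \<longlonglongrightarrow> 0" by real_asymp
  have bnd: "\<forall>i. norm (E x (N + i) p) \<le> real p / (real (N + i) + 1/2)"
  proof
    fix i show "norm (E x (N + i) p) \<le> real p / (real (N + i) + 1/2)"
      using E_bound_n[OF p, of "N + i"] E_nonneg[of "N+i" p] by (simp only: real_norm_def abs_of_nonneg)
  qed
  show ?thesis by (rule Lim_null_comparison[OF always_eventually[OF bnd] lim])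
qed

lemma E_lim_p: "n \<ge> 1 \<Longrightarrow> (\<lambda>i. E x n i) \<longlonglongrightarrow> 0"
proof -
  assume n: "n \<ge> 1"
  have lim: "(\<lambda>i. 1 / (real i + 1/2)) \<longlonglongrightarrow> 0" by real_asymp
  have b: "E x n i \<le> 1 / (real i + 1/2)" for i
  proof -
    have "E x n i * (real i + 1 - x) \<le> 1 - x" by (rule E_bound_p[OF n])
    hence "E x n i \<le> (1 - x) / (real i + 1 - x)" using x1 by (simp add: field_simps)
    also have "\<dots> \<le> 1 / (real i + 1/2)" using x0 x1 by (intro frac_le) auto
    finally show ?thesis .
  qed
  have bnd: "\<forall>i. norm (E x n i) \<le> 1 / (real i + 1/2)"
    using b E_nonneg by simp
  show ?thesis by (rule Lim_null_comparison[OF always_eventually[OF bnd] lim])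
qed

lemma T2: "p \<ge> 1 \<Longrightarrow> ((\<lambda>i. u x (N + 1 + i) * E x (N + 1 + i) p) has_sum E x N p / real p) UNIV"
proof -
  assume p: "p \<ge> 1"
  have "(\<lambda>i. E x (N + i) p - E x (N + Suc i) p) sums (E x (N + 0) p - 0)"
    using telescope_sums'[OF E_lim_n[OF p, of N]] by simp
  hence "(\<lambda>i. (E x (N + i) p - E x (N + Suc i) p) / real p) sums (E x N p / real p)"
    by (intro sums_divide) simp
  moreover have "(E x (N + i) p - E x (N + Suc i) p) / real p = u x (N + 1 + i) * E x (N + 1 + i) p" for i
    using E_diff_n[of "N + i" p] p by simp
  ultimately have "(\<lambda>i. u x (N + 1 + i) * E x (N + 1 + i) p) sums (E x N p / real p)" by simp
  thus ?thesis
    by (rule sums_nonneg_imp_has_sum) (intro mult_nonneg_nonneg u_nonneg E_nonneg; simp)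
qed

lemma T1: "n \<ge> 1 \<Longrightarrow> ((\<lambda>i. u x (Suc i) * E x n (Suc i)) has_sum 1 / real n) UNIV"
proof -
  assume n: "n \<ge> 1"
  have "(\<lambda>i. E x n i - E x n (Suc i)) sums (E x n 0 - 0)"
    using telescope_sums'[OF E_lim_p[OF n]] by simp
  hence "(\<lambda>i. (E x n i - E x n (Suc i)) / real n) sums (1 / real n)"
    by (intro sums_divide) (simp add: E_n0)
  moreover have "(E x n i - E x n (Suc i)) / real n = u x (Suc i) * E x n (Suc i)" for i
    using E_diff_p[of n i] n by simp
  ultimately have "(\<lambda>i. u x (Suc i) * E x n (Suc i)) sums (1 / real n)" by simp
  thus ?thesis
    by (rule sums_nonneg_imp_has_sum) (intro mult_nonneg_nonneg u_nonneg E_nonneg; simp)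
qed

end




definition w :: "nat \<Rightarrow> real" where "w N = 1 / (real (N+2) * real (N+3))"

lemma w_nonneg: "w N \<ge> 0" unfolding w_def by simp

lemma w_tail: "((\<lambda>i. w (i + a)) has_sum 1 / (real a + 2)) UNIV"
proof -
  have lim: "(\<lambda>i. 1 / (real (i + a) + 2)) \<longlonglongrightarrow> 0" by real_asymp
  have "(\<lambda>i. 1 / (real (i + a) + 2) - 1 / (real (Suc i + a) + 2)) sums (1 / (real (0 + a) + 2) - 0)"
    by (rule telescope_sums'[OF lim])
  moreover have "1 / (real (i + a) + 2) - 1 / (real (Suc i + a) + 2) = w (i + a)" for i
    unfolding w_def by (simp add: field_simps)
  ultimately have "(\<lambda>i. w (i + a)) sums (1 / (real a + 2))" by simp
  thus ?thesis by (rule sums_nonneg_imp_has_sum) (simp add: w_nonneg)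
qed

lemma has_sum_drop0:
  fixes f :: "nat \<Rightarrow> real"
  assumes "f 0 = 0"
  shows "((\<lambda>N. f (Suc N)) has_sum S) UNIV \<longleftrightarrow> (f has_sum S) UNIV"
proof -
  have "((\<lambda>N. f (Suc N)) has_sum S) UNIV \<longleftrightarrow> (f has_sum S) {1..}"
    using hs_shift[of f 1 S] by simp
  also have "\<dots> \<longleftrightarrow> (f has_sum S) UNIV"
    by (rule has_sum_cong_neutral) (use assms in \<open>auto simp: not_le\<close>)
  finally show ?thesis .
qed

definition Rv :: "real \<Rightarrow> nat \<Rightarrow> real" where
  "Rv x j = (\<Sum>i. u x (Suc i) / real (Suc i) ^ Suc j)"

definition Av :: "real \<Rightarrow> nat \<Rightarrow> real" where
  "Av x k = infsum (\<lambda>N. el k x (Suc N) * w N) UNIV"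

lemma zeta_hs: "s \<ge> 2 \<Longrightarrow> ((\<lambda>p. 1 / real p ^ s) has_sum zeta_nat s) {1..}"
proof -
  assume s: "s \<ge> 2"
  have "summable (\<lambda>n. inverse (real n ^ s))" by (rule inverse_power_summable[OF s])
  hence "summable (\<lambda>n. inverse (real (n + 1) ^ s))" by (subst summable_iff_shift) 
  hence "summable (\<lambda>k. 1 / real (k + 1) ^ s)" by (simp add: field_simps)
  hence "(\<lambda>k. 1 / real (k + 1) ^ s) sums zeta_nat s" unfolding zeta_nat_def by (rule summable_sums)
  hence "((\<lambda>k. 1 / real (k + 1) ^ s) has_sum zeta_nat s) UNIV"
    by (rule sums_nonneg_imp_has_sum) simp
  moreover have "((\<lambda>i. (\<lambda>p. 1 / real p ^ s) (i + 1)) has_sum zeta_nat s) UNIV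
      \<longleftrightarrow> ((\<lambda>p. 1 / real p ^ s) has_sum zeta_nat s) {1..}" by (rule hs_shift)
  ultimately show ?thesis by simp
qed

lemma w0: "((\<lambda>i. 1 / (real (i+1) * real (i+2))) has_sum 1) UNIV"
proof -
  have lim: "(\<lambda>i. 1 / (real i + 1)) \<longlonglongrightarrow> 0" by real_asymp
  have "(\<lambda>i. 1 / (real i + 1) - 1 / (real (Suc i) + 1)) sums (1 / (real 0 + 1) - 0)"
    by (rule telescope_sums'[OF lim])
  moreover have "1 / (real i + 1) - 1 / (real (Suc i) + 1) = 1 / (real (i+1) * real (i+2))" for i
    by (simp add: field_simps)
  ultimately have "(\<lambda>i. 1 / (real (i+1) * real (i+2))) sums 1" by simp
  thus ?thesis by (rule sums_nonneg_imp_has_sum) simp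
qed

context
  fixes x :: real
  assumes x0: "0 \<le> x" and x1: "x \<le> 1/2"
begin

lemmas T1' = T1[OF x0 x1] and T2' = T2[OF x0 x1] and u_nonneg' = u_nonneg[OF x0 x1]
  and E_nonneg' = E_nonneg[OF x0 x1] and el_nonneg' = el_nonneg[OF x0 x1]
  and E_0p' = E_0p[OF x0 x1]

lemma fj: "p \<ge> 1 \<Longrightarrow> ((\<lambda>N. el j x N * u x (Suc N) * E x (Suc N) p) has_sum 1 / real p ^ Suc j) UNIV"
proof (induction j)
  case 0
  thus ?case using T2'[OF 0, of 0] by (simp add: E_0p')
next
  case (Suc j)
  have p: "p \<ge> 1" by fact
  define f where "f m N = el j x (m-1) * u x m * (u x (Suc N) * E x (Suc N) p)" for m N
  define g where "g m = el j x (m-1) * u x m * (E x m p / real p)" for m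
  show ?case
  proof (rule swap_nonneg[where f=f and g=g and A="{1..}" and B="\<lambda>m. {m..}"
          and C=UNIV and D="\<lambda>N. {1..N}"])
    fix m N :: nat assume "m \<in> {1..}" "N \<in> {m..}"
    thus "0 \<le> f m N" unfolding f_def
      by (intro mult_nonneg_nonneg el_nonneg' u_nonneg' E_nonneg') auto
  next
    fix m :: nat assume m: "m \<in> {1..}"
    have "((\<lambda>i. u x (m + 1 + i) * E x (m + 1 + i) p) has_sum E x m p / real p) UNIV"
      by (rule T2'[OF p])
    hence "((\<lambda>i. (\<lambda>N. u x (Suc N) * E x (Suc N) p) (i + m)) has_sum E x m p / real p) UNIV"
      by (simp add: add.commute add.left_commute)
    moreover have "((\<lambda>i. (\<lambda>N. u x (Suc N) * E x (Suc N) p) (i + m)) has_sum E x m p / real p) UNIV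
       \<longleftrightarrow> ((\<lambda>N. u x (Suc N) * E x (Suc N) p) has_sum E x m p / real p) {m..}"
      by (rule hs_shift)
    ultimately have "((\<lambda>N. u x (Suc N) * E x (Suc N) p) has_sum E x m p / real p) {m..}"
      by simp
    thus "((\<lambda>N. f m N) has_sum g m) {m..}"
      unfolding f_def g_def by (rule has_sum_cmult_right)
  next
    have "((\<lambda>N. el j x N * u x (Suc N) * E x (Suc N) p * (1 / real p)) has_sum
          1 / real p ^ Suc j * (1 / real p)) UNIV"
      by (rule has_sum_cmult_left[OF Suc.IH[OF p]])
    hence "((\<lambda>i. g (i + 1)) has_sum 1 / real p ^ Suc (Suc j)) UNIV"
      unfolding g_def by (simp add: field_simps)
    thus "(g has_sum 1 / real p ^ Suc (Suc j)) {1..}"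
      by (simp only: hs_shift)
  next
    fix m N :: nat
    show "(m \<in> {1..} \<and> N \<in> {m..}) \<longleftrightarrow> (N \<in> UNIV \<and> m \<in> {1..N})" by auto
  next
    fix N :: nat
    have h1: "((\<lambda>m. f m N) has_sum (\<Sum>m=1..N. f m N)) {1..N}" by (rule has_sum_finite) auto
    have h2: "(\<Sum>m=1..N. f m N) = el (Suc j) x N * u x (Suc N) * E x (Suc N) p"
      unfolding f_def by (simp add: sum_distrib_right mult.assoc)
    show "((\<lambda>m. f m N) has_sum el (Suc j) x N * u x (Suc N) * E x (Suc N) p) {1..N}"
      by (subst h2[symmetric]) (rule h1)
  qed
qed

lemma Lsum:
  assumes R: "((\<lambda>p. u x p / real p ^ Suc j) has_sum R) {1..}"
  shows "((\<lambda>N. el j x N * u x (Suc N) / real (Suc N)) has_sum R) UNIV"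
proof -
  define f where "f p N = u x p * (el j x N * u x (Suc N) * E x (Suc N) p)" for p N
  show ?thesis
  proof (rule swap_nonneg[where f=f and g="\<lambda>p. u x p * (1 / real p ^ Suc j)" and A="{1..}" and B="\<lambda>p. UNIV"
          and C=UNIV and D="\<lambda>N. {1..}"])
    fix p N :: nat assume "p \<in> {1..}" "N \<in> (UNIV :: nat set)"
    thus "0 \<le> f p N" unfolding f_def
      by (intro mult_nonneg_nonneg el_nonneg' u_nonneg' E_nonneg') auto
  next
    fix p :: nat assume "p \<in> {1..}"
    thus "((\<lambda>N. f p N) has_sum u x p * (1 / real p ^ Suc j)) UNIV"
      unfolding f_def by (intro has_sum_cmult_right fj) auto
  next
    show "((\<lambda>p. u x p * (1 / real p ^ Suc j)) has_sum R) {1..}"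
      using R by simp
  next
    fix p N :: nat
    show "(p \<in> {1..} \<and> N \<in> UNIV) \<longleftrightarrow> (N \<in> UNIV \<and> p \<in> {1..})" by auto
  next
    fix N :: nat
    have "((\<lambda>i. u x (Suc i) * E x (Suc N) (Suc i)) has_sum 1 / real (Suc N)) UNIV"
      by (rule T1') simp
    hence "((\<lambda>i. (\<lambda>p. u x p * E x (Suc N) p) (i + 1)) has_sum 1 / real (Suc N)) UNIV"
      by simp
    moreover have "((\<lambda>i. (\<lambda>p. u x p * E x (Suc N) p) (i + 1)) has_sum 1 / real (Suc N)) UNIV
       \<longleftrightarrow> ((\<lambda>p. u x p * E x (Suc N) p) has_sum 1 / real (Suc N)) {1..}"
      by (rule hs_shift)
    ultimately have "((\<lambda>p. u x p * E x (Suc N) p) has_sum 1 / real (Suc N)) {1..}"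
      by simp
    hence "((\<lambda>p. (el j x N * u x (Suc N)) * (u x p * E x (Suc N) p)) has_sum
             (el j x N * u x (Suc N)) * (1 / real (Suc N))) {1..}"
      by (rule has_sum_cmult_right)
    thus "((\<lambda>p. f p N) has_sum el j x N * u x (Suc N) / real (Suc N)) {1..}"
      unfolding f_def by (simp add: algebra_simps)
  qed
qed


lemma R_hs: "((\<lambda>p. u x p / real p ^ Suc j) has_sum Rv x j) {1..}"
proof -
  have "summable (\<lambda>n. inverse (real n ^ 2))" by (rule inverse_power_summable) simp
  hence "summable (\<lambda>n. inverse (real (n + 1) ^ 2))" by (subst summable_iff_shift)
  hence sm2: "summable (\<lambda>n. 2 * inverse (real (n + 1) ^ 2))" by (rule summable_mult)
  have "summable (\<lambda>i. u x (Suc i) / real (Suc i) ^ Suc j)"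
  proof (rule summable_comparison_test'[OF sm2])
    fix n :: nat
    have "u x (Suc n) \<le> 2 / real (Suc n)" by (rule u_le[OF x0 x1]) simp
    moreover have "0 \<le> u x (Suc n)" by (rule u_nonneg') simp
    moreover have "real (Suc n) ^ 1 \<le> real (Suc n) ^ Suc j"
      by (rule power_increasing) auto
    hence "real (Suc n) \<le> real (Suc n) ^ Suc j" by simp
    ultimately have "u x (Suc n) / real (Suc n) ^ Suc j \<le> (2 / real (Suc n)) / real (Suc n)"
      by (intro frac_le) auto
    also have "\<dots> = 2 * inverse (real (n + 1) ^ 2)" by (simp add: field_simps power2_eq_square)
    finally show "norm (u x (Suc n) / real (Suc n) ^ Suc j) \<le> 2 * inverse (real (n + 1) ^ 2)"
      using u_nonneg'[of "Suc n"] by simp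
  qed
  hence "(\<lambda>i. u x (Suc i) / real (Suc i) ^ Suc j) sums Rv x j" unfolding Rv_def by (rule summable_sums)
  hence "((\<lambda>i. u x (Suc i) / real (Suc i) ^ Suc j) has_sum Rv x j) UNIV"
    by (rule sums_nonneg_imp_has_sum) (intro divide_nonneg_nonneg u_nonneg'; simp)
  moreover have "((\<lambda>i. (\<lambda>p. u x p / real p ^ Suc j) (i + 1)) has_sum Rv x j) UNIV
      \<longleftrightarrow> ((\<lambda>p. u x p / real p ^ Suc j) has_sum Rv x j) {1..}" by (rule hs_shift)
  ultimately show ?thesis by simp
qed

lemma R_ser: "(\<lambda>h. zeta_nat (j+2+h) * x^h) sums Rv x j"
proof -
  define f where "f p h = x^h / real p ^ (j+2+h)" for p h :: nat
  have "((\<lambda>h. zeta_nat (j+2+h) * x^h) has_sum Rv x j) UNIV"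
  proof (rule swap_nonneg[where f=f and g="\<lambda>p. u x p / real p ^ Suc j" and A="{1..}" and B="\<lambda>p. UNIV"
          and C=UNIV and D="\<lambda>h. {1..}"])
    fix p h :: nat assume "p \<in> {1..}" "h \<in> (UNIV :: nat set)"
    thus "0 \<le> f p h" unfolding f_def using x0 by simp
  next
    fix p :: nat assume p: "p \<in> {1..}"
    have pp: "real p > 0" "real p - x > 0" using p x1 by auto
    have "norm (x / real p) < 1" using pp x0 by (simp add: abs_of_nonneg)
    hence "(\<lambda>h. (x / real p) ^ h) sums (1 / (1 - x / real p))" by (rule geometric_sums)
    hence "(\<lambda>h. (1 / real p ^ (j+2)) * (x / real p) ^ h) sums ((1 / real p ^ (j+2)) * (1 / (1 - x / real p)))"
      by (rule sums_mult)
    moreover have "(1 / real p ^ (j+2)) * (x / real p) ^ h = f p h" for h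
      unfolding f_def by (simp add: power_divide power_add field_simps)
    moreover have "(1 / real p ^ (j+2)) * (1 / (1 - x / real p)) = u x p / real p ^ Suc j"
      unfolding u_def using pp by (simp add: field_simps)
    ultimately have "(\<lambda>h. f p h) sums (u x p / real p ^ Suc j)" by simp
    thus "((\<lambda>h. f p h) has_sum u x p / real p ^ Suc j) UNIV"
      by (rule sums_nonneg_imp_has_sum) (simp add: f_def x0)
  next
    show "((\<lambda>p. u x p / real p ^ Suc j) has_sum Rv x j) {1..}" by (rule R_hs)
  next
    fix p h :: nat
    show "(p \<in> {1..} \<and> h \<in> UNIV) \<longleftrightarrow> (h \<in> UNIV \<and> p \<in> {1..})" by auto
  next
    fix h :: nat
    have "((\<lambda>p. x^h * (1 / real p ^ (j+2+h))) has_sum x^h * zeta_nat (j+2+h)) {1..}"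
      by (rule has_sum_cmult_right[OF zeta_hs]) simp
    thus "((\<lambda>p. f p h) has_sum zeta_nat (j+2+h) * x^h) {1..}"
      unfolding f_def by (simp add: mult.commute)
  qed
  thus ?thesis by (rule has_sum_imp_sums)
qed

lemma alg:
  fixes m e :: real
  assumes "m > 0" "m - x > 0" "1 + x > 0"
  shows "(e / (m * (m + 1)) + x * (e * (1 / (m - x)) / m)) * (1 / (1 + x)) = e * (1 / (m - x)) * (1 / (m + 1))"
proof -
  have n: "m + 1 \<noteq> 0" "m \<noteq> 0" "m - x \<noteq> 0" "1 + x \<noteq> 0" using assms by auto
  have "e / (m * (m + 1)) + x * (e * (1 / (m - x)) / m) = (e * (m - x) + x * e * (m + 1)) / (m * (m + 1) * (m - x))"
    using n by (simp add: add_divide_distrib)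
  also have "e * (m - x) + x * e * (m + 1) = e * m * (1 + x)" by (simp add: algebra_simps)
  finally have "e / (m * (m + 1)) + x * (e * (1 / (m - x)) / m) = e * m * (1 + x) / (m * (m + 1) * (m - x))" .
  also have "\<dots> = (1 + x) * (e / ((m + 1) * (m - x)))" using n by simp
  finally show ?thesis using n by simp
qed

lemma Arel:
  assumes Bh: "((\<lambda>i. el j x i / (real (i+1) * real (i+2))) has_sum Bv) UNIV"
    and Lh: "((\<lambda>i. el j x i * u x (Suc i) / real (Suc i)) has_sum Lv) UNIV"
  shows "((\<lambda>N. el (Suc j) x (Suc N) * w N) has_sum ((Bv + x * Lv) / (1 + x))) UNIV"
proof -
  define f where "f m N = el j x (m-1) * u x m * w N" for m N :: nat
  define g where "g m = el j x (m-1) * u x m * (1 / (real m + 1))" for m :: nat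
  show ?thesis
  proof (rule swap_nonneg[where f=f and g=g and A="{1..}" and B="\<lambda>m. {m-1..}"
          and C=UNIV and D="\<lambda>N. {1..Suc N}"])
    fix m N :: nat assume "m \<in> {1..}" "N \<in> {m-1..}"
    thus "0 \<le> f m N" unfolding f_def
      by (intro mult_nonneg_nonneg el_nonneg' u_nonneg' w_nonneg) auto
  next
    fix m :: nat assume m: "m \<in> {1..}"
    have "((\<lambda>i. w (i + (m-1))) has_sum 1 / (real (m-1) + 2)) UNIV" by (rule w_tail)
    moreover have "((\<lambda>i. w (i + (m-1))) has_sum 1 / (real (m-1) + 2)) UNIV
       \<longleftrightarrow> (w has_sum 1 / (real (m-1) + 2)) {m-1..}" by (rule hs_shift)
    ultimately have prev: "(w has_sum 1 / (real (m-1) + 2)) {m-1..}" by simp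
    have eq: "1 / (real (m-1) + 2) = 1 / (real m + 1)" using m by (simp add: of_nat_diff)
    from prev[unfolded eq] have "(w has_sum 1 / (real m + 1)) {m-1..}" .
    thus "((\<lambda>N. f m N) has_sum g m) {m-1..}"
      unfolding f_def g_def by (rule has_sum_cmult_right)
  next
    have "((\<lambda>i. el j x i / (real (i+1) * real (i+2)) + x * (el j x i * u x (Suc i) / real (Suc i)))
            has_sum (Bv + x * Lv)) UNIV"
      by (intro has_sum_add has_sum_cmult_right Bh Lh)
    hence "((\<lambda>i. (el j x i / (real (i+1) * real (i+2)) + x * (el j x i * u x (Suc i) / real (Suc i))) * (1 / (1+x)))
            has_sum (Bv + x * Lv) * (1 / (1+x))) UNIV"
      by (rule has_sum_cmult_left)
    moreover have "(el j x i / (real (i+1) * real (i+2)) + x * (el j x i * u x (Suc i) / real (Suc i))) * (1 / (1+x))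
          = g (i + 1)" for i
    proof -
      have d: "real (Suc i) > 0" "real (Suc i) - x > 0" "1 + x > 0" using x0 x1 by auto
      have r: "real (i+1) = real (Suc i)" "real (i+2) = real (Suc i) + 1" by simp_all
      show ?thesis unfolding g_def u_def r using alg[OF d] by simp
    qed
    ultimately have "((\<lambda>i. g (i + 1)) has_sum (Bv + x * Lv) / (1 + x)) UNIV" by simp
    moreover have "((\<lambda>i. g (i + 1)) has_sum (Bv + x * Lv) / (1 + x)) UNIV
       \<longleftrightarrow> (g has_sum (Bv + x * Lv) / (1 + x)) {1..}" by (rule hs_shift)
    ultimately show "(g has_sum (Bv + x * Lv) / (1 + x)) {1..}" by simp
  next
    fix m N :: nat
    show "(m \<in> {1..} \<and> N \<in> {m-1..}) \<longleftrightarrow> (N \<in> UNIV \<and> m \<in> {1..Suc N})" by auto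
  next
    fix N :: nat
    have h1: "((\<lambda>m. f m N) has_sum (\<Sum>m=1..Suc N. f m N)) {1..Suc N}" by (rule has_sum_finite) auto
    have h2: "(\<Sum>m=1..Suc N. f m N) = el (Suc j) x (Suc N) * w N"
      unfolding f_def by (simp add: sum_distrib_right distrib_right)
    show "((\<lambda>m. f m N) has_sum el (Suc j) x (Suc N) * w N) {1..Suc N}"
      by (subst h2[symmetric]) (rule h1)
  qed
qed

lemma A_all: "((\<lambda>N. el (Suc j) x (Suc N) * w N) has_sum Av x (Suc j)) UNIV \<and>
   Av x (Suc j) = ((if j = 0 then 1 else Av x j) + x * Rv x j) / (1 + x)"
proof (induction j)
  case 0
  have h: "((\<lambda>N. el (Suc 0) x (Suc N) * w N) has_sum ((1 + x * Rv x 0) / (1 + x))) UNIV"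
    by (rule Arel) (use w0 Lsum[OF R_hs[of 0]] in simp_all)
  have eqA: "Av x (Suc 0) = (1 + x * Rv x 0) / (1 + x)" unfolding Av_def by (rule infsumI[OF h])
  show ?case by (rule conjI, subst eqA, rule h, simp add: eqA)
next
  case (Suc j)
  have B: "((\<lambda>i. el (Suc j) x i / (real (i+1) * real (i+2))) has_sum Av x (Suc j)) UNIV"
  proof -
    have e: "(\<lambda>N. el (Suc j) x (Suc N) * w N) = (\<lambda>N. (\<lambda>i. el (Suc j) x i / (real (i+1) * real (i+2))) (Suc N))"
      by (rule ext) (simp add: w_def)
    have "((\<lambda>N. (\<lambda>i. el (Suc j) x i / (real (i+1) * real (i+2))) (Suc N)) has_sum Av x (Suc j)) UNIV"
      using conjunct1[OF Suc.IH] unfolding e .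
    thus ?thesis by (subst (asm) has_sum_drop0) simp_all
  qed
  have h: "((\<lambda>N. el (Suc (Suc j)) x (Suc N) * w N) has_sum ((Av x (Suc j) + x * Rv x (Suc j)) / (1 + x))) UNIV"
    by (rule Arel[OF B Lsum[OF R_hs]])
  have eqA: "Av x (Suc (Suc j)) = (Av x (Suc j) + x * Rv x (Suc j)) / (1 + x)"
    unfolding Av_def[of x "Suc (Suc j)"] by (rule infsumI[OF h])
  show ?case by (rule conjI, subst eqA, rule h, simp add: eqA)
qed

end



context
  fixes x :: real
  assumes x0: "0 \<le> x" and x1: "x \<le> 1/2"
begin

lemma geo: "m \<ge> 1 \<Longrightarrow> (\<lambda>i. x^i / real m ^ Suc i) sums u x m"
proof -
  assume m: "m \<ge> 1"
  have pp: "real m > 0" "real m - x > 0" using m x1 by auto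
  have "norm (x / real m) < 1" using pp x0 x1 m by (simp add: abs_of_nonneg)
  hence "(\<lambda>h. (x / real m) ^ h) sums (1 / (1 - x / real m))" by (rule geometric_sums)
  hence "(\<lambda>h. (1 / real m) * (x / real m) ^ h) sums ((1 / real m) * (1 / (1 - x / real m)))"
    by (rule sums_mult)
  moreover have "(1 / real m) * (x / real m) ^ h = x^h / real m ^ Suc h" for h
    by (simp add: power_divide)
  moreover have "(1 / real m) * (1 / (1 - x / real m)) = u x m"
    unfolding u_def using pp by (simp add: field_simps)
  ultimately show ?thesis by simp
qed

lemma Nsym_term:
  "Nsym (Suc k + h) (Suc k) N * x^h =
     (\<Sum>m=1..N. \<Sum>i\<le>h. (x^i / real m ^ Suc i) * (Nsym (k + (h - i)) k (m-1) * x^(h - i)))"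
proof -
  have inner: "(\<Sum>i=1..Suc k + h. Nsym (Suc k + h - i) k (m-1) / real m ^ i) * x^h =
     (\<Sum>i\<le>h. (x^i / real m ^ Suc i) * (Nsym (k + (h - i)) k (m-1) * x^(h - i)))" for m
  proof -
    have "(\<Sum>i=1..Suc k + h. Nsym (Suc k + h - i) k (m-1) / real m ^ i) =
          (\<Sum>i=Suc 0..Suc (k + h). Nsym (Suc k + h - i) k (m-1) / real m ^ i)" by simp
    also have "\<dots> = (\<Sum>i=0..k + h. Nsym (Suc k + h - Suc i) k (m-1) / real m ^ Suc i)"
      by (subst sum.atLeast_Suc_atMost_Suc_shift) (simp add: o_def)
    also have "\<dots> = (\<Sum>i=0..h. Nsym (Suc k + h - Suc i) k (m-1) / real m ^ Suc i)"
    proof (rule sum.mono_neutral_right)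
      show "\<forall>i\<in>{0..k + h} - {0..h}. Nsym (Suc k + h - Suc i) k (m - 1) / real m ^ Suc i = 0"
        by (auto intro!: Nsym_small)
    qed auto
    finally have "(\<Sum>i=1..Suc k + h. Nsym (Suc k + h - i) k (m-1) / real m ^ i) * x^h =
        (\<Sum>i=0..h. Nsym (Suc k + h - Suc i) k (m-1) / real m ^ Suc i * x^h)"
      by (simp add: sum_distrib_right)
    also have "\<dots> = (\<Sum>i\<le>h. (x^i / real m ^ Suc i) * (Nsym (k + (h - i)) k (m-1) * x^(h - i)))"
    proof (subst atLeast0AtMost, rule sum.cong[OF refl])
      fix i assume i: "i \<in> {..h}"
      hence e1: "Suc k + h - Suc i = k + (h - i)" by auto
      have e2: "x^h = x^i * x^(h-i)" using i by (simp add: power_add[symmetric])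
      show "Nsym (Suc k + h - Suc i) k (m-1) / real m ^ Suc i * x^h =
            (x^i / real m ^ Suc i) * (Nsym (k + (h - i)) k (m-1) * x^(h - i))"
        unfolding e1 e2 by simp
    qed
    finally show ?thesis .
  qed
  have "Nsym (Suc k + h) (Suc k) N * x^h =
     (\<Sum>m=1..N. (\<Sum>i=1..Suc k + h. Nsym (Suc k + h - i) k (m-1) / real m ^ i) * x^h)"
    unfolding Nsym_Suc by (rule sum_distrib_right)
  also have "\<dots> = (\<Sum>m=1..N. \<Sum>i\<le>h. (x^i / real m ^ Suc i) * (Nsym (k + (h - i)) k (m-1) * x^(h - i)))"
    by (rule sum.cong[OF refl], rule inner)
  finally show ?thesis .
qed

lemma ps_el: "((\<lambda>h. Nsym (k+h) k N * x^h) has_sum el k x N) UNIV"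
proof (induction k arbitrary: N)
  case 0
  show ?case
    by (rule has_sum_finite_neutralI[where B="{0}"]) (auto simp: Nsym_0)
next
  case (Suc k)
  define a where "a m i = x^i / real m ^ Suc i" for m i :: nat
  define b where "b m i = Nsym (k+i) k (m-1) * x^i" for m i :: nat
  have cp: "(\<lambda>h. \<Sum>i\<le>h. a m i * b m (h - i)) sums (u x m * el k x (m-1))" if m: "m \<in> {1..N}" for m
  proof -
    have sa: "a m sums u x m" unfolding a_def using m by (intro geo) auto
    have sb: "b m sums el k x (m-1)" unfolding b_def by (rule has_sum_imp_sums[OF Suc.IH])
    have ea: "(\<lambda>i. norm (a m i)) = a m" by (rule ext) (simp add: a_def abs_of_nonneg x0)
    have eb: "(\<lambda>i. norm (b m i)) = b m" by (rule ext) (simp add: b_def abs_of_nonneg x0 Nsym_nonneg)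
    have na: "summable (\<lambda>i. norm (a m i))"
      unfolding ea by (rule sums_summable[OF sa])
    have nb: "summable (\<lambda>i. norm (b m i))"
      unfolding eb by (rule sums_summable[OF sb])
    have "(\<lambda>h. \<Sum>i\<le>h. a m i * b m (h - i)) sums ((\<Sum>i. a m i) * (\<Sum>i. b m i))"
      by (rule Cauchy_product_sums[OF na nb])
    thus ?thesis using sums_unique[OF sa] sums_unique[OF sb] by simp
  qed
  have "(\<lambda>h. \<Sum>m\<in>{1..N}. \<Sum>i\<le>h. a m i * b m (h - i)) sums (\<Sum>m\<in>{1..N}. u x m * el k x (m-1))"
    by (rule sums_sum[OF cp])
  moreover have "(\<Sum>m\<in>{1..N}. \<Sum>i\<le>h. a m i * b m (h - i)) = Nsym (Suc k + h) (Suc k) N * x^h" for h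
    unfolding Nsym_term a_def b_def by simp
  moreover have "(\<Sum>m\<in>{1..N}. u x m * el k x (m-1)) = el (Suc k) x N"
    by (simp add: mult.commute)
  ultimately have "(\<lambda>h. Nsym (Suc k + h) (Suc k) N * x^h) sums el (Suc k) x N" by simp
  thus ?case
    by (rule sums_nonneg_imp_has_sum) (use x0 Nsym_nonneg in simp)
qed

lemma eta_ser:
  assumes xp: "0 < x"
  shows "(\<lambda>h. eta011 (Nsym (Suc j + h) (Suc j)) * x^h) sums Av x (Suc j)"
proof -
  define f where "f N h = Nsym (Suc j + h) (Suc j) (Suc N) * x^h * w N" for N h :: nat
  have A: "((\<lambda>N. el (Suc j) x (Suc N) * w N) has_sum Av x (Suc j)) UNIV"
    using A_all[OF x0 x1] by blast
  have rows: "((\<lambda>h. f N h) has_sum el (Suc j) x (Suc N) * w N) UNIV" if "N \<in> UNIV" for N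
    unfolding f_def by (rule has_sum_cmult_left[OF ps_el])
  have nn: "0 \<le> f N h" if "N \<in> UNIV" "h \<in> UNIV" for N h
    unfolding f_def using x0 by (intro mult_nonneg_nonneg Nsym_nonneg w_nonneg) auto
  have eqs: "(N \<in> (UNIV::nat set) \<and> h \<in> (UNIV::nat set)) \<longleftrightarrow> (h \<in> UNIV \<and> N \<in> UNIV)" for N h
    by simp
  note ex = swap_nonneg_ex[where A=UNIV and B="\<lambda>N. UNIV" and C=UNIV and D="\<lambda>h. UNIV", OF nn rows A eqs]
  have ex1: "\<forall>h\<in>UNIV. (\<lambda>N. f N h) summable_on UNIV" by (rule ex(1))
  have ex2: "((\<lambda>h. infsum (\<lambda>N. f N h) UNIV) has_sum Av x (Suc j)) UNIV" by (rule ex(2))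
  have eq: "infsum (\<lambda>N. f N h) UNIV = eta011 (Nsym (Suc j + h) (Suc j)) * x^h" for h
  proof -
    define G where "G N = Nsym (Suc j + h) (Suc j) (Suc N) * w N" for N
    have fG: "(\<lambda>N. f N h) = (\<lambda>N. x^h * G N)" by (rule ext) (simp add: f_def G_def)
    have xh: "x^h \<noteq> 0" using xp by simp
    have "(\<lambda>N. f N h) summable_on UNIV" using ex1 by simp
    hence "(\<lambda>N. x^h * G N) summable_on UNIV" unfolding fG .
    hence "(\<lambda>N. (1 / x^h) * (x^h * G N)) summable_on UNIV"
      by (rule summable_on_cmult_right)
    moreover have "(\<lambda>N. (1 / x^h) * (x^h * G N)) = G" using xh by (simp add: fun_eq_iff)
    ultimately have Gs: "G summable_on UNIV" by simp
    hence "G sums infsum G UNIV" by (intro has_sum_imp_sums) simp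
    moreover have "G = (\<lambda>k. Nsym (Suc j + h) (Suc j) (k + 1) / (real (k + 2) * real (k + 3)))"
      by (rule ext) (simp add: G_def w_def)
    ultimately have "(\<lambda>k. Nsym (Suc j + h) (Suc j) (k + 1) / (real (k + 2) * real (k + 3))) sums infsum G UNIV"
      by simp
    hence "eta011 (Nsym (Suc j + h) (Suc j)) = infsum G UNIV"
      unfolding eta011_def by (rule sums_unique[symmetric])
    moreover have "infsum (\<lambda>N. f N h) UNIV = x^h * infsum G UNIV"
      unfolding fG by (rule infsum_cmult_right) (use Gs in simp)
    ultimately show ?thesis by simp
  qed
  show ?thesis using has_sum_imp_sums[OF ex2] unfolding eq .
qed

end




lemma coeff0:
  fixes d :: "nat \<Rightarrow> real"
  assumes dl: "0 < \<delta>" and sm: "summable (\<lambda>h. d h * \<delta>^h)"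
    and z: "\<And>y. 0 < y \<Longrightarrow> y < \<delta> \<Longrightarrow> (\<lambda>h. d h * y^h) sums 0"
  shows "d 0 = 0"
proof -
  define F where "F z = (\<Sum>h. d h * z^h)" for z :: real
  have "(F \<longlongrightarrow> d 0) (at 0)"
  proof (rule powser_limit_0[OF dl])
    fix z :: real assume "norm z < \<delta>"
    hence "summable (\<lambda>h. d h * z^h)" using powser_inside[OF sm, of z] dl by simp
    thus "(\<lambda>h. d h * z^h) sums F z" unfolding F_def by (rule summable_sums)
  qed
  hence lim1: "(F \<longlongrightarrow> d 0) (at_right 0)" by (rule tendsto_within_subset) simp
  have "eventually (\<lambda>y. y \<in> {0<..<\<delta>}) (at_right 0)" by (rule eventually_at_right_real[OF dl])
  hence ev: "eventually (\<lambda>y. F y = 0) (at_right 0)"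
    by (rule eventually_mono) (auto simp: F_def intro: sums_unique[symmetric] z)
  have lim2: "(F \<longlongrightarrow> 0) (at_right 0)" by (rule tendsto_eventually[OF ev])
  show ?thesis by (rule tendsto_unique[OF _ lim1 lim2]) simp
qed

lemma coeffs_zero:
  fixes d :: "nat \<Rightarrow> real"
  assumes dl: "0 < \<delta>" and sm: "summable (\<lambda>h. d h * \<delta>^h)"
    and z: "\<And>y. 0 < y \<Longrightarrow> y < \<delta> \<Longrightarrow> (\<lambda>h. d h * y^h) sums 0"
  shows "d n = 0"
  using sm z
proof (induction n arbitrary: d)
  case 0
  show ?case by (rule coeff0[OF dl 0(1) 0(2)])
next
  case (Suc n)
  have d0: "d 0 = 0" by (rule coeff0[OF dl Suc.prems(1) Suc.prems(2)])
  have "summable (\<lambda>h. d (h + 1) * \<delta>^(h + 1))"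
    using Suc.prems(1) by (subst summable_iff_shift)
  hence "summable (\<lambda>h. d (h + 1) * \<delta>^(h + 1) / \<delta>)" by (rule summable_divide)
  moreover have "d (h + 1) * \<delta>^(h + 1) / \<delta> = d (Suc h) * \<delta>^h" for h using dl by simp
  ultimately have sm': "summable (\<lambda>h. d (Suc h) * \<delta>^h)" by simp
  have z': "(\<lambda>h. d (Suc h) * y^h) sums 0" if y: "0 < y" "y < \<delta>" for y
  proof -
    have "(\<lambda>h. d h * y^h) sums (0 + d 0 * y^0)" using Suc.prems(2)[OF y] d0 by simp
    hence "(\<lambda>h. d (Suc h) * y^(Suc h)) sums 0" by (subst sums_Suc_iff)
    hence "(\<lambda>h. d (Suc h) * y^(Suc h) / y) sums (0 / y)" by (rule sums_divide)
    moreover have "d (Suc h) * y^(Suc h) / y = d (Suc h) * y^h" for h using y by simp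
    ultimately show ?thesis by simp
  qed
  have "(\<lambda>h. d (Suc h)) n = 0" by (rule Suc.IH[OF sm' z'])
  thus ?case by simp
qed

definition dd :: "nat \<Rightarrow> nat \<Rightarrow> real" where
  "dd j h = eta011 (Nsym (Suc j + h) (Suc j))
     + (if h = 0 then 0 else eta011 (Nsym (Suc j + (h - 1)) (Suc j)))
     - (if j = 0 then (if h = 0 then 1 else 0) else eta011 (Nsym (j + h) j))
     - (if h = 0 then 0 else zeta_nat (j + 1 + h))"

lemma dd_sums:
  assumes yp: "0 < y" and y1: "y \<le> 1/2"
  shows "(\<lambda>h. dd j h * y^h) sums 0"
proof -
  have y0: "0 \<le> y" using yp by simp
  define a where "a h = eta011 (Nsym (Suc j + h) (Suc j))" for h
  have S1: "(\<lambda>h. a h * y^h) sums Av y (Suc j)" unfolding a_def by (rule eta_ser[OF y0 y1 yp])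
  have S2: "(\<lambda>h. (if h = 0 then 0 else a (h - 1)) * y^h) sums (y * Av y (Suc j))"
  proof -
    have "(\<lambda>h. y * (a h * y^h)) sums (y * Av y (Suc j))" by (rule sums_mult[OF S1])
    hence "(\<lambda>h. (\<lambda>h. (if h = 0 then 0 else a (h - 1)) * y^h) (Suc h)) sums (y * Av y (Suc j))"
      by (simp add: mult_ac)
    thus ?thesis by (subst (asm) sums_Suc_iff) simp
  qed
  define Bv where "Bv = (if j = 0 then 1 else Av y j)"
  have S3: "(\<lambda>h. (if j = 0 then (if h = 0 then 1 else 0) else eta011 (Nsym (j + h) j)) * y^h) sums Bv"
  proof (cases j)
    case 0
    have s: "(\<lambda>h. if h = 0 then (\<lambda>_. 1::real) h else 0) sums (\<lambda>_. 1) 0" by (rule sums_single)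
    have e: "(\<lambda>h. (if j = 0 then (if h = 0 then 1 else 0) else eta011 (Nsym (j + h) j)) * y^h) =
             (\<lambda>h. if h = 0 then (\<lambda>_. 1::real) h else 0)" using 0 by (simp add: fun_eq_iff)
    show ?thesis unfolding e Bv_def using s 0 by simp
  next
    case (Suc j')
    thus ?thesis unfolding Bv_def using eta_ser[OF y0 y1 yp, of j'] by simp
  qed
  have S4: "(\<lambda>h. (if h = 0 then 0 else zeta_nat (j + 1 + h)) * y^h) sums (y * Rv y j)"
  proof -
    have "(\<lambda>h. y * (zeta_nat (j+2+h) * y^h)) sums (y * Rv y j)" by (rule sums_mult[OF R_ser[OF y0 y1]])
    hence "(\<lambda>h. (\<lambda>h. (if h = 0 then 0 else zeta_nat (j + 1 + h)) * y^h) (Suc h)) sums (y * Rv y j)"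
      by (simp add: mult_ac)
    thus ?thesis by (subst (asm) sums_Suc_iff) simp
  qed
  have rel: "Av y (Suc j) = (Bv + y * Rv y j) / (1 + y)"
    using A_all[OF y0 y1, of j] by (simp add: Bv_def)
  have tot: "Av y (Suc j) + y * Av y (Suc j) - Bv - y * Rv y j = 0"
  proof -
    have "(1 + y) * Av y (Suc j) = Bv + y * Rv y j" using rel yp by (simp add: field_simps)
    thus ?thesis by (simp add: algebra_simps)
  qed
  have "(\<lambda>h. a h * y^h + (if h = 0 then 0 else a (h - 1)) * y^h
            - (if j = 0 then (if h = 0 then 1 else 0) else eta011 (Nsym (j + h) j)) * y^h
            - (if h = 0 then 0 else zeta_nat (j + 1 + h)) * y^h)
        sums (Av y (Suc j) + y * Av y (Suc j) - Bv - y * Rv y j)"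
    by (intro sums_diff sums_add S1 S2 S3 S4)
  moreover have "a h * y^h + (if h = 0 then 0 else a (h - 1)) * y^h
            - (if j = 0 then (if h = 0 then 1 else 0) else eta011 (Nsym (j + h) j)) * y^h
            - (if h = 0 then 0 else zeta_nat (j + 1 + h)) * y^h = dd j h * y^h" for h
    unfolding dd_def a_def by (simp add: algebra_simps)
  ultimately show ?thesis unfolding tot by simp
qed

lemma dd_zero: "dd j h = 0"
proof (rule coeffs_zero[where \<delta>="1/2"])
  show "summable (\<lambda>h. dd j h * (1/2)^h)" by (rule sums_summable[OF dd_sums]) auto
  fix y :: real assume "0 < y" "y < 1/2"
  thus "(\<lambda>h. dd j h * y^h) sums 0" by (intro dd_sums) auto
qed simp

lemma diag: "eta011 (Nsym (Suc j) (Suc j)) = 1"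
proof (induction j)
  case 0
  have "dd 0 0 = 0" by (rule dd_zero)
  thus ?case by (simp add: dd_def)
next
  case (Suc j)
  have "dd (Suc j) 0 = 0" by (rule dd_zero)
  thus ?case using Suc by (simp add: dd_def)
qed

lemma offdiag: "eta011 (Nsym (Suc j + Suc h) (Suc j)) + eta011 (Nsym (Suc j + h) (Suc j))
   - (if j = 0 then 0 else eta011 (Nsym (j + Suc h) j)) = zeta_nat (j + 1 + Suc h)"
  using dd_zero[of j "Suc h"] unfolding dd_def by (cases j) simp_all

theorem mainTheorem10:
  shows "(\<forall>n::nat. n \<ge> 1 \<longrightarrow> eta011 (Nsym n n) = 1)
    \<and> (\<forall>n::nat. n \<ge> 2 \<longrightarrow>
          eta011 (Nsym n 1) = zeta_nat n - eta011 (Nsym (n - 1) 1))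
    \<and> (\<forall>n k::nat. n \<ge> 2 \<longrightarrow> 1 < k \<longrightarrow> k < n \<longrightarrow>
          eta011 (Nsym n k) = zeta_nat n + eta011 (Nsym (n - 1) (k - 1)) - eta011 (Nsym (n - 1) k))"
proof (intro conjI allI impI)
  fix n :: nat assume "n \<ge> 1"
  then obtain j where "n = Suc j" by (cases n) auto
  thus "eta011 (Nsym n n) = 1" by (simp add: diag)
next
  fix n :: nat assume "n \<ge> 2"
  then obtain h where n: "n = Suc (Suc h)" by (metis add_2_eq_Suc le_Suc_ex)
  have "eta011 (Nsym (Suc 0 + Suc h) (Suc 0)) + eta011 (Nsym (Suc 0 + h) (Suc 0))
     - (if (0::nat) = 0 then 0 else eta011 (Nsym (0 + Suc h) 0)) = zeta_nat (0 + 1 + Suc h)"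
    by (rule offdiag)
  thus "eta011 (Nsym n 1) = zeta_nat n - eta011 (Nsym (n - 1) 1)" using n by simp
next
  fix n k :: nat assume "n \<ge> 2" "1 < k" "k < n"
  define j where "j = k - 1"
  define h where "h = n - k - 1"
  have jk: "k = Suc j" "j \<ge> 1" using \<open>1 < k\<close> unfolding j_def by auto
  have n: "n = Suc j + Suc h" using \<open>k < n\<close> \<open>1 < k\<close> unfolding j_def h_def by auto
  have "eta011 (Nsym (Suc j + Suc h) (Suc j)) + eta011 (Nsym (Suc j + h) (Suc j))
   - (if j = 0 then 0 else eta011 (Nsym (j + Suc h) j)) = zeta_nat (j + 1 + Suc h)"
    by (rule offdiag)
  moreover have "j + Suc h = n - 1" "Suc j + h = n - 1" "j + 1 + Suc h = n" using n by auto
  ultimately show "eta011 (Nsym n k) = zeta_nat n + eta011 (Nsym (n - 1) (k - 1)) - eta011 (Nsym (n - 1) k)"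
    using jk n by simp
qed


end
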